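(* Let $D$ be a connection on a vector bundle $E$ and let $F\subseteq E$ be a parallel subbundle. If the induced connections on $F$ and on $E/F$ are exact, and the curvature of the induced connection on $E/F$ is injective, then $D$ is exact.
   Context: A subbundle $F$ is parallel if $D(\Gamma(F))\subseteq\Gamma(\Lambda^1\otimes F)$; then $D$ restricts to a connection on $F$ and descends to a connection on $E/F$. For a connection $D$ on $E$: $D^\wedge$ is the exterior covariant derivative $\phi_b{}^\alpha\mapsto D_{[a}\phi_{b]}{}^\alpha$, $\kappa=D^\wedge\circ D:E\to\Lambda^2\otimes E$ the curvature (assumed of constant rank). $D$ is exact if every section $\phi$ of $\Lambda^1\otimes E$ with $D^\wedge\phi=\kappa(\psi)$ for some section $\psi$ of $E$ is of the form $D\eta$ for some section $\eta$ of $E$. Statements are local. *)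

theory Defs
  imports "HOL-Analysis.Analysis"
begin

text \<open>Local setting: base = open set U in R^n (type real^'n), the vector bundle E is the
trivial bundle U x R^k (fibre real^'k).  Sections of E are functions real^'n => real^'k,
E-valued 1-forms are real^'n => real^'k^'n (component phi x $ b), E-valued 2-forms are
real^'n => real^'k^'n^'n (component omega x $ a $ b).\<close>

fun C_k_on :: "nat \<Rightarrow> (real^'n) set \<Rightarrow> (real^'n \<Rightarrow> 'b::euclidean_space) \<Rightarrow> bool" where
  "C_k_on 0 U f = continuous_on U f"
| "C_k_on (Suc k) U f = (f differentiable_on U \<and>
      (\<forall>i\<in>Basis. C_k_on k U (\<lambda>x. frechet_derivative f (at x) i)))"

definition smooth_on :: "(real^'n) set \<Rightarrow> (real^'n \<Rightarrow> 'b::euclidean_space) \<Rightarrow> bool" where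
  "smooth_on U f \<longleftrightarrow> (\<forall>k. C_k_on k U f)"

definition pd :: "'n::finite \<Rightarrow> (real^'n \<Rightarrow> 'b::real_normed_vector) \<Rightarrow> real^'n \<Rightarrow> 'b" where
  "pd a f x = frechet_derivative f (at x) (axis a 1)"

text \<open>A connection D on the trivial bundle is D = d + Gamma, with connection matrices
G x $ a (a k x k matrix for each direction a).\<close>
definition covd :: "(real^'n \<Rightarrow> real^'k^'k^'n) \<Rightarrow> (real^'n \<Rightarrow> real^'k) \<Rightarrow> real^'n \<Rightarrow> real^'k^'n" where
  "covd G \<sigma> x = (\<chi> a. pd a \<sigma> x + (G x $ a) *v \<sigma> x)"

text \<open>Exterior covariant derivative  phi_b \<mapsto> D_[a phi_b]  (antisymmetrisation with factor 1/2).\<close>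
definition extd :: "(real^'n \<Rightarrow> real^'k^'k^'n) \<Rightarrow> (real^'n \<Rightarrow> real^'k^'n) \<Rightarrow> real^'n \<Rightarrow> real^'k^'n^'n" where
  "extd G \<phi> x = (\<chi> a b. (1/2) *\<^sub>R
      ((pd a (\<lambda>y. \<phi> y $ b) x + (G x $ a) *v (\<phi> x $ b))
     - (pd b (\<lambda>y. \<phi> y $ a) x + (G x $ b) *v (\<phi> x $ a))))"

definition curv :: "(real^'n \<Rightarrow> real^'k^'k^'n) \<Rightarrow> (real^'n \<Rightarrow> real^'k) \<Rightarrow> real^'n \<Rightarrow> real^'k^'n^'n" where
  "curv G \<psi> = extd G (covd G \<psi>)"

text \<open>The curvature as a bundle map on the fibre over x (kappa is tensorial, so its value on
v is kappa applied to the section that is constant v in the trivialisation, evaluated at x).\<close>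
definition curv_at :: "(real^'n \<Rightarrow> real^'k^'k^'n) \<Rightarrow> real^'n \<Rightarrow> real^'k \<Rightarrow> real^'k^'n^'n" where
  "curv_at G x v = curv G (\<lambda>_. v) x"

definition connection_on :: "(real^'n) set \<Rightarrow> (real^'n \<Rightarrow> real^'k^'k^'n) \<Rightarrow> bool" where
  "connection_on U G \<longleftrightarrow> smooth_on U G"

definition curv_const_rank :: "(real^'n) set \<Rightarrow> (real^'n \<Rightarrow> real^'k^'k^'n) \<Rightarrow> bool" where
  "curv_const_rank U G \<longleftrightarrow> (\<exists>r. \<forall>x\<in>U. dim (range (curv_at G x)) = r)"

text \<open>Exactness of D (a local statement: local solvability near every point).\<close>
definition exact_on :: "(real^'n) set \<Rightarrow> (real^'n \<Rightarrow> real^'k^'k^'n) \<Rightarrow> bool" where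
  "exact_on U G \<longleftrightarrow>
    (\<forall>V \<phi> \<psi>. open V \<and> V \<subseteq> U \<and> smooth_on V \<phi> \<and> smooth_on V \<psi> \<and>
       (\<forall>x\<in>V. extd G \<phi> x = curv G \<psi> x) \<longrightarrow>
       (\<forall>x\<in>V. \<exists>W \<eta>. open W \<and> x \<in> W \<and> W \<subseteq> V \<and> smooth_on W \<eta> \<and>
          (\<forall>y\<in>W. covd G \<eta> y = \<phi> y)))"

definition subbundle_on :: "(real^'n) set \<Rightarrow> (real^'n \<Rightarrow> (real^'k) set) \<Rightarrow> bool" where
  "subbundle_on U F \<longleftrightarrow>
    (\<forall>x\<in>U. subspace (F x)) \<and> (\<exists>r. \<forall>x\<in>U. dim (F x) = r) \<and>
    (\<forall>x\<in>U. \<exists>W s. open W \<and> x \<in> W \<and> W \<subseteq> U \<and> (\<forall>i::'k. smooth_on W (s i)) \<and>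
        (\<forall>y\<in>W. F y = span (range (\<lambda>i. s i y))))"

definition parallel_on :: "(real^'n) set \<Rightarrow> (real^'n \<Rightarrow> real^'k^'k^'n) \<Rightarrow> (real^'n \<Rightarrow> (real^'k) set) \<Rightarrow> bool" where
  "parallel_on U G F \<longleftrightarrow>
    (\<forall>V \<sigma>. open V \<and> V \<subseteq> U \<and> smooth_on V \<sigma> \<and> (\<forall>y\<in>V. \<sigma> y \<in> F y) \<longrightarrow>
       (\<forall>y\<in>V. \<forall>a. covd G \<sigma> y $ a \<in> F y))"

definition sub_curv_const_rank :: "(real^'n) set \<Rightarrow> (real^'n \<Rightarrow> real^'k^'k^'n) \<Rightarrow> (real^'n \<Rightarrow> (real^'k) set) \<Rightarrow> bool" where
  "sub_curv_const_rank U G F \<longleftrightarrow> (\<exists>r. \<forall>x\<in>U. dim (curv_at G x ` F x) = r)"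

text \<open>Exactness of the induced connection D|_F on F: all sections take values in F.\<close>
definition exact_sub_on :: "(real^'n) set \<Rightarrow> (real^'n \<Rightarrow> real^'k^'k^'n) \<Rightarrow> (real^'n \<Rightarrow> (real^'k) set) \<Rightarrow> bool" where
  "exact_sub_on U G F \<longleftrightarrow>
    (\<forall>V \<phi> \<psi>. open V \<and> V \<subseteq> U \<and> smooth_on V \<phi> \<and> smooth_on V \<psi> \<and>
       (\<forall>y\<in>V. \<forall>b. \<phi> y $ b \<in> F y) \<and> (\<forall>y\<in>V. \<psi> y \<in> F y) \<and>
       (\<forall>x\<in>V. extd G \<phi> x = curv G \<psi> x) \<longrightarrow>
       (\<forall>x\<in>V. \<exists>W \<eta>. open W \<and> x \<in> W \<and> W \<subseteq> V \<and> smooth_on W \<eta> \<and>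
          (\<forall>y\<in>W. \<eta> y \<in> F y) \<and> (\<forall>y\<in>W. covd G \<eta> y = \<phi> y)))"

text \<open>Exactness of the induced connection on E/F: sections of E/F (and of forms with
values in E/F) are represented by smooth lifts to E, equalities hold modulo F.\<close>
definition exact_quot_on :: "(real^'n) set \<Rightarrow> (real^'n \<Rightarrow> real^'k^'k^'n) \<Rightarrow> (real^'n \<Rightarrow> (real^'k) set) \<Rightarrow> bool" where
  "exact_quot_on U G F \<longleftrightarrow>
    (\<forall>V \<phi> \<psi>. open V \<and> V \<subseteq> U \<and> smooth_on V \<phi> \<and> smooth_on V \<psi> \<and>
       (\<forall>x\<in>V. \<forall>a b. extd G \<phi> x $ a $ b - curv G \<psi> x $ a $ b \<in> F x) \<longrightarrow>
       (\<forall>x\<in>V. \<exists>W \<eta>. open W \<and> x \<in> W \<and> W \<subseteq> V \<and> smooth_on W \<eta> \<and>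
          (\<forall>y\<in>W. \<forall>a. covd G \<eta> y $ a - \<phi> y $ a \<in> F y)))"

text \<open>The curvature of the induced connection on E/F is injective (fibrewise):
kappa_{E/F}[v] = [kappa v] = 0 in Lambda^2 (x) E/F implies [v] = 0.\<close>
definition quot_curv_injective_on :: "(real^'n) set \<Rightarrow> (real^'n \<Rightarrow> real^'k^'k^'n) \<Rightarrow> (real^'n \<Rightarrow> (real^'k) set) \<Rightarrow> bool" where
  "quot_curv_injective_on U G F \<longleftrightarrow>
    (\<forall>x\<in>U. \<forall>v. (\<forall>a b. curv_at G x v $ a $ b \<in> F x) \<longrightarrow> v \<in> F x)"

end

theory Submission
  imports Defs
begin

lemma fd_local:
  assumes "open W" "y \<in> W" "\<And>z. z \<in> W \<Longrightarrow> f z = g z"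
  shows "frechet_derivative f (at y) = frechet_derivative g (at y)"
proof -
  have "\<And>f'. (f has_derivative f') (at y) = (g has_derivative f') (at y)"
    using has_derivative_transform_within_open[OF _ assms(1,2), where g=g and f=f and t=UNIV]
      has_derivative_transform_within_open[OF _ assms(1,2), where g=f and f=g and t=UNIV] assms(3)
    by (metis (mono_tags, lifting))
  then show ?thesis unfolding frechet_derivative_def by simp
qed

lemma diff_local:
  assumes "open W" "y \<in> W" "\<And>z. z \<in> W \<Longrightarrow> f z = g z" "f differentiable at y"
  shows "g differentiable at y"
  using assms has_derivative_transform_within_open[OF _ assms(1,2), where g=g and f=f and t=UNIV]
  unfolding differentiable_def by metis

lemma C_k_mono: "C_k_on (Suc k) U f \<Longrightarrow> C_k_on k U f"
proof (induction k arbitrary: f)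
  case 0 then show ?case by (simp add: differentiable_imp_continuous_on)
next
  case (Suc k) then show ?case by simp
qed

lemma C_k_subset: "C_k_on k U f \<Longrightarrow> V \<subseteq> U \<Longrightarrow> C_k_on k V f"
proof (induction k arbitrary: f)
  case 0 then show ?case by (simp add: continuous_on_subset)
next
  case (Suc k) then show ?case by (auto intro: differentiable_on_subset)
qed

lemma C_k_cong: "C_k_on k U f \<Longrightarrow> open U \<Longrightarrow> (\<And>x. x \<in> U \<Longrightarrow> f x = g x) \<Longrightarrow> C_k_on k U g"
proof (induction k arbitrary: f g)
  case 0 then show ?case using continuous_on_cong by (metis C_k_on.simps(1))
next
  case (Suc k)
  have d: "g differentiable_on U"
    using Suc.prems diff_local[of U _ f g]
    by (auto simp: differentiable_on_eq_differentiable_at)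
  have "C_k_on k U (\<lambda>x. frechet_derivative g (at x) i)" if "i \<in> Basis" for i
    using Suc.IH[of "\<lambda>x. frechet_derivative f (at x) i"] Suc.prems that fd_local[of U _ f g]
    by auto
  with d show ?case by simp
qed

lemma C_k_const: "open U \<Longrightarrow> C_k_on k U (\<lambda>x. c)"
proof (induction k arbitrary: c)
  case 0 then show ?case by simp
next
  case (Suc k)
  have "frechet_derivative (\<lambda>x. c) (at x) = (\<lambda>_. 0)" for x
    by (metis frechet_derivative_at has_derivative_const)
  then show ?case using Suc by simp
qed

lemma C_k_linear:
  assumes "bounded_linear L" "open U"
  shows "C_k_on k U f \<Longrightarrow> C_k_on k U (\<lambda>x. L (f x))"
proof (induction k arbitrary: f)
  case 0 then show ?case using assms(1) by (simp add: bounded_linear.continuous_on)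
next
  case (Suc k)
  have df: "\<And>x. x \<in> U \<Longrightarrow> f differentiable at x"
    using Suc.prems assms(2) by (simp add: differentiable_on_eq_differentiable_at)
  have hd: "\<And>x. x \<in> U \<Longrightarrow> ((\<lambda>x. L (f x)) has_derivative (\<lambda>h. L (frechet_derivative f (at x) h))) (at x)"
    using bounded_linear.has_derivative[OF assms(1)] df frechet_derivative_works by blast
  then have "(\<lambda>x. L (f x)) differentiable_on U"
    using assms(2) by (auto simp: differentiable_on_eq_differentiable_at differentiable_def)
  moreover have "C_k_on k U (\<lambda>x. frechet_derivative (\<lambda>x. L (f x)) (at x) i)" if "i \<in> Basis" for i
  proof (rule C_k_cong[OF _ assms(2)])
    show "C_k_on k U (\<lambda>x. L (frechet_derivative f (at x) i))"
      using Suc that by simp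
    show "\<And>x. x \<in> U \<Longrightarrow> L (frechet_derivative f (at x) i) = frechet_derivative (\<lambda>x. L (f x)) (at x) i"
      using fun_cong[OF frechet_derivative_at[OF hd], of _ i] by simp
  qed
  ultimately show ?case by simp
qed

lemma C_k_add:
  assumes "open U"
  shows "C_k_on k U f \<Longrightarrow> C_k_on k U g \<Longrightarrow> C_k_on k U (\<lambda>x. f x + g x)"
proof (induction k arbitrary: f g)
  case 0 then show ?case by (simp add: continuous_on_add)
next
  case (Suc k)
  have df: "\<And>x. x \<in> U \<Longrightarrow> f differentiable at x" "\<And>x. x \<in> U \<Longrightarrow> g differentiable at x"
    using Suc.prems assms by (simp_all add: differentiable_on_eq_differentiable_at)
  have hd: "\<And>x. x \<in> U \<Longrightarrow> ((\<lambda>x. f x + g x) has_derivative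
     (\<lambda>h. frechet_derivative f (at x) h + frechet_derivative g (at x) h)) (at x)"
    by (rule has_derivative_add[OF df(1)[unfolded frechet_derivative_works] df(2)[unfolded frechet_derivative_works]])
  then have "(\<lambda>x. f x + g x) differentiable_on U"
    using assms by (auto simp: differentiable_on_eq_differentiable_at differentiable_def)
  moreover have "C_k_on k U (\<lambda>x. frechet_derivative (\<lambda>x. f x + g x) (at x) i)" if "i \<in> Basis" for i
  proof (rule C_k_cong[OF _ assms])
    have "C_k_on k U (\<lambda>x. frechet_derivative f (at x) i)" "C_k_on k U (\<lambda>x. frechet_derivative g (at x) i)"
      using Suc.prems that by simp_all
    then show "C_k_on k U (\<lambda>x. frechet_derivative f (at x) i + frechet_derivative g (at x) i)"
      by (rule Suc.IH)
    show "\<And>x. x \<in> U \<Longrightarrow> frechet_derivative f (at x) i + frechet_derivative g (at x) i = frechet_derivative (\<lambda>x. f x + g x) (at x) i"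
      using fun_cong[OF frechet_derivative_at[OF hd], of _ i] by simp
  qed
  ultimately show ?case by simp
qed

lemma C_k_bilinear:
  assumes "bounded_bilinear P" "open U"
  shows "C_k_on k U f \<Longrightarrow> C_k_on k U g \<Longrightarrow> C_k_on k U (\<lambda>x. P (f x) (g x))"
proof (induction k arbitrary: f g)
  case 0 then show ?case
    using bounded_bilinear.continuous_on[OF assms(1)] by simp
next
  case (Suc k)
  have df: "\<And>x. x \<in> U \<Longrightarrow> f differentiable at x" "\<And>x. x \<in> U \<Longrightarrow> g differentiable at x"
    using Suc.prems assms(2) by (simp_all add: differentiable_on_eq_differentiable_at)
  have hd: "\<And>x. x \<in> U \<Longrightarrow> ((\<lambda>x. P (f x) (g x)) has_derivative
     (\<lambda>h. P (f x) (frechet_derivative g (at x) h) + P (frechet_derivative f (at x) h) (g x))) (at x)"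
    by (rule bounded_bilinear.FDERIV[OF assms(1) df(1)[unfolded frechet_derivative_works] df(2)[unfolded frechet_derivative_works]])
  then have "(\<lambda>x. P (f x) (g x)) differentiable_on U"
    using assms(2) by (auto simp: differentiable_on_eq_differentiable_at differentiable_def)
  moreover have "C_k_on k U (\<lambda>x. frechet_derivative (\<lambda>x. P (f x) (g x)) (at x) i)" if "i \<in> Basis" for i
  proof (rule C_k_cong[OF _ assms(2)])
    have f1: "C_k_on k U f" "C_k_on k U g" using Suc.prems C_k_mono by blast+
    have d1: "C_k_on k U (\<lambda>x. frechet_derivative f (at x) i)" "C_k_on k U (\<lambda>x. frechet_derivative g (at x) i)"
      using Suc.prems that by simp_all
    have "C_k_on k U (\<lambda>x. P (f x) (frechet_derivative g (at x) i))"
      by (rule Suc.IH[OF f1(1) d1(2)])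
    moreover have "C_k_on k U (\<lambda>x. P (frechet_derivative f (at x) i) (g x))"
      by (rule Suc.IH[OF d1(1) f1(2)])
    ultimately show "C_k_on k U (\<lambda>x. P (f x) (frechet_derivative g (at x) i) + P (frechet_derivative f (at x) i) (g x))"
      by (rule C_k_add[OF assms(2)])
    show "\<And>x. x \<in> U \<Longrightarrow> P (f x) (frechet_derivative g (at x) i) + P (frechet_derivative f (at x) i) (g x) = frechet_derivative (\<lambda>x. P (f x) (g x)) (at x) i"
      using fun_cong[OF frechet_derivative_at[OF hd], of _ i] by simp
  qed
  ultimately show ?case by simp
qed


lemma smooth_subset: "smooth_on U f \<Longrightarrow> V \<subseteq> U \<Longrightarrow> smooth_on V f"
  unfolding smooth_on_def using C_k_subset by blast

lemma smooth_linear: "bounded_linear L \<Longrightarrow> open U \<Longrightarrow> smooth_on U f \<Longrightarrow> smooth_on U (\<lambda>x. L (f x))"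
  unfolding smooth_on_def using C_k_linear by blast

lemma smooth_bilinear: "bounded_bilinear P \<Longrightarrow> open U \<Longrightarrow> smooth_on U f \<Longrightarrow> smooth_on U g
   \<Longrightarrow> smooth_on U (\<lambda>x. P (f x) (g x))"
  unfolding smooth_on_def using C_k_bilinear by blast

lemma smooth_add: "open U \<Longrightarrow> smooth_on U f \<Longrightarrow> smooth_on U g \<Longrightarrow> smooth_on U (\<lambda>x. f x + g x)"
  unfolding smooth_on_def using C_k_add by blast

lemma smooth_const: "open U \<Longrightarrow> smooth_on U (\<lambda>x. c)"
  unfolding smooth_on_def using C_k_const by blast

lemma smooth_uminus: "open U \<Longrightarrow> smooth_on U f \<Longrightarrow> smooth_on U (\<lambda>x. - f x)"
  using smooth_linear[of uminus] bounded_linear_minus[OF bounded_linear_ident] by auto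

lemma smooth_diff: "open U \<Longrightarrow> smooth_on U f \<Longrightarrow> smooth_on U g \<Longrightarrow> smooth_on U (\<lambda>x. f x - g x)"
  using smooth_add[of U f "\<lambda>x. - g x"] smooth_uminus[of U g] by simp

lemma smooth_scaleR: "open U \<Longrightarrow> smooth_on U f \<Longrightarrow> smooth_on U (\<lambda>x. c *\<^sub>R f x)"
  using smooth_linear[of "\<lambda>v. c *\<^sub>R v"] bounded_linear_scaleR_right by blast

lemma smooth_sum:
  assumes "open U" "finite S" "\<And>a. a \<in> S \<Longrightarrow> smooth_on U (h a)"
  shows "smooth_on U (\<lambda>x. \<Sum>a\<in>S. h a x)"
  using assms(2,3)
proof (induction S rule: finite_induct)
  case empty then show ?case using smooth_const[OF assms(1)] by simp
next
  case (insert a S)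
  then show ?case using assms(1) smooth_add[of U "h a" "\<lambda>x. \<Sum>a\<in>S. h a x"] by simp
qed

lemma smooth_nth: "open U \<Longrightarrow> smooth_on U f \<Longrightarrow> smooth_on U (\<lambda>x. f x $ i)"
  using smooth_linear[of "\<lambda>v. v $ i"] bounded_linear_vec_nth by blast

lemma bounded_linear_axis: "bounded_linear (axis i :: 'a::euclidean_space \<Rightarrow> 'a^'n)"
proof -
  have "linear (axis i :: 'a::euclidean_space \<Rightarrow> 'a^'n)"
    by (auto simp: linear_iff axis_def vec_eq_iff)
  then show ?thesis by (simp add: linear_conv_bounded_linear)
qed

lemma smooth_vec:
  fixes h :: "'i::finite \<Rightarrow> real^'n \<Rightarrow> 'a::euclidean_space"
  assumes "open U" "\<And>a. smooth_on U (h a)"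
  shows "smooth_on U (\<lambda>x. \<chi> a. h a x)"
proof -
  have eq: "(\<lambda>x. \<chi> a. h a x) = (\<lambda>x. \<Sum>a\<in>UNIV. axis a (h a x))"
  proof (rule ext)
    fix x
    show "(\<chi> a. h a x) = (\<Sum>a\<in>UNIV. axis a (h a x))"
    proof (rule iffD2[OF vec_eq_iff], rule allI)
      fix c
      show "(\<chi> a. h a x) $ c = (\<Sum>a\<in>UNIV. axis a (h a x)) $ c"
        apply (simp only: sum_component)
        apply (simp only: axis_def vec_lambda_beta)
        apply (simp only: sum.delta sum.delta' finite UNIV_I if_True)
        done
    qed
  qed
  have "smooth_on U (\<lambda>x. \<Sum>a\<in>UNIV. axis a (h a x))"
    by (rule smooth_sum[OF assms(1) finite smooth_linear[OF bounded_linear_axis assms(1) assms(2)]])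
  then show ?thesis using eq by simp
qed

lemma bounded_bilinear_mv: "bounded_bilinear (\<lambda>(M::real^'m^'n) v. M *v v)"
proof -
  have "bilinear (\<lambda>(M::real^'m^'n) v. M *v v)"
    unfolding bilinear_def
    by (auto simp: linear_iff matrix_vector_right_distrib matrix_vector_mult_add_rdistrib
        matrix_vector_mult_scaleR scaleR_matrix_vector_assoc)
  then show ?thesis by (simp add: bilinear_conv_bounded_bilinear)
qed

lemma smooth_mv:
  fixes M :: "real^'n \<Rightarrow> real^'m^'k"
  shows "open U \<Longrightarrow> smooth_on U M \<Longrightarrow> smooth_on U v \<Longrightarrow> smooth_on U (\<lambda>x. M x *v v x)"
  by (rule smooth_bilinear[OF bounded_bilinear_mv])

lemma smooth_pd: "smooth_on U f \<Longrightarrow> smooth_on U (pd a f)"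
proof -
  assume f: "smooth_on U f"
  have ax: "axis a (1::real) \<in> Basis" by simp
  have "C_k_on k U (\<lambda>x. frechet_derivative f (at x) (axis a 1))" for k
  proof -
    have "C_k_on (Suc k) U f" using f unfolding smooth_on_def by blast
    then show ?thesis using ax by simp
  qed
  then show ?thesis unfolding smooth_on_def pd_def[abs_def] by simp
qed

lemma smooth_differentiable: "smooth_on U f \<Longrightarrow> open U \<Longrightarrow> x \<in> U \<Longrightarrow> f differentiable at x"
proof -
  assume "smooth_on U f" "open U" "x \<in> U"
  then have "C_k_on (Suc 0) U f" unfolding smooth_on_def by blast
  then have "f differentiable_on U" by simp
  then show ?thesis using \<open>open U\<close> \<open>x \<in> U\<close> differentiable_on_eq_differentiable_at by blast
qed

lemma smooth_covd:
  assumes "open U" "smooth_on U G" "smooth_on U \<eta>"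
  shows "smooth_on U (covd G \<eta>)"
proof -
  have "smooth_on U (\<lambda>x. pd a \<eta> x + G x $ a *v \<eta> x)" for a
    by (rule smooth_add[OF assms(1) smooth_pd[OF assms(3)] smooth_mv[OF assms(1) smooth_nth[OF assms(1,2)] assms(3)]])
  then have "smooth_on U (\<lambda>x. \<chi> a. pd a \<eta> x + G x $ a *v \<eta> x)"
    by (rule smooth_vec[OF assms(1)])
  then show ?thesis unfolding covd_def[abs_def] .
qed


lemma pd_at: "(f has_derivative f') (at x) \<Longrightarrow> pd a f x = f' (axis a 1)"
  unfolding pd_def using frechet_derivative_at by metis

lemma pd_works: "f differentiable at x \<Longrightarrow> (f has_derivative frechet_derivative f (at x)) (at x)"
  using frechet_derivative_works by blast

lemma pd_add: "f differentiable at x \<Longrightarrow> g differentiable at x \<Longrightarrow> pd a (\<lambda>y. f y + g y) x = pd a f x + pd a g x"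
  by (subst pd_at[OF has_derivative_add[OF pd_works pd_works]]) (auto simp: pd_def)

lemma pd_diff: "f differentiable at x \<Longrightarrow> g differentiable at x \<Longrightarrow> pd a (\<lambda>y. f y - g y) x = pd a f x - pd a g x"
  by (subst pd_at[OF has_derivative_diff[OF pd_works pd_works]]) (auto simp: pd_def)

lemma pd_linear: "bounded_linear L \<Longrightarrow> f differentiable at x \<Longrightarrow> pd a (\<lambda>y. L (f y)) x = L (pd a f x)"
  by (subst pd_at[OF bounded_linear.has_derivative[OF _ pd_works]]) (auto simp: pd_def)

lemma pd_bilinear: "bounded_bilinear P \<Longrightarrow> f differentiable at x \<Longrightarrow> g differentiable at x \<Longrightarrow>
   pd a (\<lambda>y. P (f y) (g y)) x = P (f x) (pd a g x) + P (pd a f x) (g x)"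
  by (subst pd_at[OF bounded_bilinear.FDERIV[OF _ pd_works pd_works]]) (auto simp: pd_def)

lemma pd_const: "pd a (\<lambda>y. c) x = 0"
  by (subst pd_at[OF has_derivative_const]) simp

lemma pd_local: "open W \<Longrightarrow> x \<in> W \<Longrightarrow> (\<And>z. z \<in> W \<Longrightarrow> f z = g z) \<Longrightarrow> pd a f x = pd a g x"
  unfolding pd_def using fd_local by metis

lemma mvt1:
  fixes h :: "real \<Rightarrow> 'b::real_normed_vector"
  assumes t: "0 \<le> t"
    and d: "\<And>u. 0 \<le> u \<Longrightarrow> u \<le> t \<Longrightarrow> (h has_vector_derivative h' u) (at u)"
    and b: "\<And>u. 0 \<le> u \<Longrightarrow> u \<le> t \<Longrightarrow> norm (h' u - c) \<le> B"
  shows "norm (h t - h 0 - t *\<^sub>R c) \<le> t * B"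
proof (cases "t = 0")
  case True then show ?thesis by simp
next
  case False
  then have t0: "0 < t" using t by simp
  define g where "g u = h u - u *\<^sub>R c" for u
  have dg: "(g has_vector_derivative (h' u - c)) (at u)" if "0 \<le> u" "u \<le> t" for u
    unfolding g_def using d[OF that]
    by (auto intro!: derivative_eq_intros)
  have cg: "continuous_on {0..t} g"
  proof (rule continuous_at_imp_continuous_on, rule ballI)
    fix u assume "u \<in> {0..t}"
    then show "isCont g u" by (intro has_vector_derivative_continuous[OF dg]) auto
  qed
  have dphi: "((\<lambda>u. u * B) has_vector_derivative B) (at u)" for u
    by (auto simp: has_vector_derivative_def intro!: derivative_eq_intros)
  have "norm (g t - g 0) \<le> t * B - 0 * B"
    by (rule differentiable_bound_general[OF t0 cg _ dg dphi b])
       (auto intro!: continuous_intros)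
  then show ?thesis by (simp add: g_def algebra_simps)
qed

lemma line_deriv:
  assumes "h differentiable at (p + s *\<^sub>R e)"
  shows "((\<lambda>s. h (p + s *\<^sub>R e)) has_vector_derivative frechet_derivative h (at (p + s *\<^sub>R e)) e) (at s)"
proof -
  have l: "linear (frechet_derivative h (at (p + s *\<^sub>R e)))"
    using pd_works[OF assms] has_derivative_linear by blast
  have "((\<lambda>s. p + s *\<^sub>R e) has_derivative (\<lambda>d. d *\<^sub>R e)) (at s)"
    by (auto intro!: derivative_eq_intros)
  from has_derivative_compose[OF this pd_works[OF assms]]
  have "((\<lambda>s. h (p + s *\<^sub>R e)) has_derivative (\<lambda>d. frechet_derivative h (at (p + s *\<^sub>R e)) (d *\<^sub>R e))) (at s)"
    by (simp add: o_def)
  then show ?thesis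
    unfolding has_vector_derivative_def using linear_scale[OF l] by simp
qed


lemma schwarz_est:
  fixes f :: "real^'n \<Rightarrow> 'b::real_normed_vector"
  assumes W: "open W" "x \<in> W"
    and df: "\<And>z. z \<in> W \<Longrightarrow> f differentiable at z"
    and dg: "\<And>z. z \<in> W \<Longrightarrow> pd b f differentiable at z"
    and cD: "continuous_on W (pd a (pd b f))"
    and e: "e > 0"
  shows "\<exists>\<delta>>0. \<forall>t. 0 < t \<and> t < \<delta> \<longrightarrow>
     norm (f (x + t *\<^sub>R axis a 1 + t *\<^sub>R axis b 1) - f (x + t *\<^sub>R axis a 1) - f (x + t *\<^sub>R axis b 1) + f x
       - t *\<^sub>R t *\<^sub>R pd a (pd b f) x) \<le> t * (t * e)"
proof -
  define D where "D = pd a (pd b f)"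
  define ea where "ea = (axis a 1 :: real^'n)"
  define eb where "eb = (axis b 1 :: real^'n)"
  have "isCont D x" using cD W continuous_on_eq_continuous_at unfolding D_def by blast
  then have "D \<midarrow>x\<rightarrow> D x" by (simp add: isCont_def)
  from LIM_D[OF this e] obtain r where r: "r > 0"
    "\<And>z. z \<noteq> x \<and> norm (z - x) < r \<Longrightarrow> norm (D z - D x) < e" by blast
  have rD: "norm (D z - D x) \<le> e" if "norm (z - x) < r" for z
    using r(2)[of z] that e by (cases "z = x") auto
  obtain r2 where r2: "r2 > 0" "ball x r2 \<subseteq> W" using W open_contains_ball by blast
  define \<rho> where "\<rho> = min r r2"
  have inb: "norm ((x + u *\<^sub>R ea + v *\<^sub>R eb) - x) < \<rho>"
    if "0 \<le> u" "u \<le> t" "0 \<le> v" "v \<le> t" "t < \<rho> / 2" for u v t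
  proof -
    have "norm ((x + u *\<^sub>R ea + v *\<^sub>R eb) - x) = norm (u *\<^sub>R ea + v *\<^sub>R eb)"
      by (simp add: algebra_simps)
    also have "\<dots> \<le> norm (u *\<^sub>R ea) + norm (v *\<^sub>R eb)" by (rule norm_triangle_ineq)
    also have "\<dots> = u + v" using that by (simp add: ea_def eb_def)
    finally show ?thesis using that by simp
  qed
  have inW: "x + u *\<^sub>R ea + v *\<^sub>R eb \<in> W"
    if "0 \<le> u" "u \<le> t" "0 \<le> v" "v \<le> t" "t < \<rho> / 2" for u v t
  proof -
    have "norm ((x + u *\<^sub>R ea + v *\<^sub>R eb) - x) < r2" using inb[OF that] unfolding \<rho>_def by simp
    moreover have "dist x (x + u *\<^sub>R ea + v *\<^sub>R eb) = norm ((x + u *\<^sub>R ea + v *\<^sub>R eb) - x)"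
      by (simp add: dist_norm norm_minus_commute add.commute)
    ultimately have "x + u *\<^sub>R ea + v *\<^sub>R eb \<in> ball x r2" by simp
    then show ?thesis using r2(2) by blast
  qed
  have Dle: "norm (D (x + u *\<^sub>R ea + v *\<^sub>R eb) - D x) \<le> e"
    if "0 \<le> u" "u \<le> t" "0 \<le> v" "v \<le> t" "t < \<rho> / 2" for u v t
    using inb[OF that] rD unfolding \<rho>_def by simp
  show ?thesis
  proof (rule exI[of _ "\<rho> / 2"], intro conjI allI impI)
    show "0 < \<rho> / 2" using r r2 by (simp add: \<rho>_def)
    fix t assume tt: "0 < t \<and> t < \<rho> / 2"
    have step1: "norm (pd b f (x + t *\<^sub>R ea + v *\<^sub>R eb) - pd b f (x + v *\<^sub>R eb) - t *\<^sub>R D x) \<le> t * e"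
      if v: "0 \<le> v" "v \<le> t" for v
    proof -
      define p where "p = x + v *\<^sub>R eb"
      have pt: "p + u *\<^sub>R ea = x + u *\<^sub>R ea + v *\<^sub>R eb" for u by (simp add: p_def algebra_simps)
      have "norm (pd b f (p + t *\<^sub>R ea) - pd b f (p + 0 *\<^sub>R ea) - t *\<^sub>R D x) \<le> t * e"
      proof (rule mvt1)
        show "0 \<le> t" using tt by simp
        fix u assume u: "0 \<le> u" "u \<le> t"
        have "pd b f differentiable at (p + u *\<^sub>R ea)"
          unfolding pt using dg inW[OF u v] tt by blast
        from line_deriv[OF this]
        show "((\<lambda>s. pd b f (p + s *\<^sub>R ea)) has_vector_derivative D (p + u *\<^sub>R ea)) (at u)"
          by (simp add: D_def pd_def ea_def)
        show "norm (D (p + u *\<^sub>R ea) - D x) \<le> e"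
          unfolding pt using Dle[OF u v] tt by blast
      qed
      then show ?thesis unfolding pt by simp
    qed
    define k where "k v = f (x + t *\<^sub>R ea + v *\<^sub>R eb) - f (x + v *\<^sub>R eb)" for v
    have "norm (k t - k 0 - t *\<^sub>R (t *\<^sub>R D x)) \<le> t * (t * e)"
    proof (rule mvt1)
      show "0 \<le> t" using tt by simp
      fix v assume v: "0 \<le> v" "v \<le> t"
      have i1: "x + t *\<^sub>R ea + v *\<^sub>R eb \<in> W" using inW[of t t v] v tt by simp
      have i2: "x + v *\<^sub>R eb \<in> W" using inW[of 0 t v] v tt by simp
      have h1: "((\<lambda>s. f (x + t *\<^sub>R ea + s *\<^sub>R eb)) has_vector_derivative pd b f (x + t *\<^sub>R ea + v *\<^sub>R eb)) (at v)"
        using line_deriv[OF df[OF i1]] by (simp add: pd_def eb_def)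
      have h2: "((\<lambda>s. f (x + s *\<^sub>R eb)) has_vector_derivative pd b f (x + v *\<^sub>R eb)) (at v)"
        using line_deriv[OF df[OF i2]] by (simp add: pd_def eb_def)
      show "(k has_vector_derivative (pd b f (x + t *\<^sub>R ea + v *\<^sub>R eb) - pd b f (x + v *\<^sub>R eb))) (at v)"
        unfolding k_def[abs_def] by (rule has_vector_derivative_diff[OF h1 h2])
      show "norm (pd b f (x + t *\<^sub>R ea + v *\<^sub>R eb) - pd b f (x + v *\<^sub>R eb) - t *\<^sub>R D x) \<le> t * e"
        by (rule step1[OF v])
    qed
    then show "norm (f (x + t *\<^sub>R axis a 1 + t *\<^sub>R axis b 1) - f (x + t *\<^sub>R axis a 1) - f (x + t *\<^sub>R axis b 1) + f x
       - t *\<^sub>R t *\<^sub>R pd a (pd b f) x) \<le> t * (t * e)"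
      by (simp add: k_def D_def ea_def eb_def algebra_simps)
  qed
qed


lemma schwarz:
  fixes f :: "real^'n \<Rightarrow> 'b::real_normed_vector"
  assumes W: "open W" "x \<in> W"
    and df: "\<And>z. z \<in> W \<Longrightarrow> f differentiable at z"
    and dga: "\<And>z. z \<in> W \<Longrightarrow> pd a f differentiable at z"
    and dgb: "\<And>z. z \<in> W \<Longrightarrow> pd b f differentiable at z"
    and cab: "continuous_on W (pd a (pd b f))"
    and cba: "continuous_on W (pd b (pd a f))"
  shows "pd a (pd b f) x = pd b (pd a f) x"
proof -
  define z where "z = pd a (pd b f) x - pd b (pd a f) x"
  have bound: "norm z \<le> 2 * e" if e: "e > 0" for e
  proof -
    obtain d1 where d1: "d1 > 0" "\<forall>t. 0 < t \<and> t < d1 \<longrightarrow>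
     norm (f (x + t *\<^sub>R axis a 1 + t *\<^sub>R axis b 1) - f (x + t *\<^sub>R axis a 1) - f (x + t *\<^sub>R axis b 1) + f x
       - t *\<^sub>R t *\<^sub>R pd a (pd b f) x) \<le> t * (t * e)"
      using schwarz_est[OF W df dgb cab e] by blast
    obtain d2 where d2: "d2 > 0" "\<forall>t. 0 < t \<and> t < d2 \<longrightarrow>
     norm (f (x + t *\<^sub>R axis b 1 + t *\<^sub>R axis a 1) - f (x + t *\<^sub>R axis b 1) - f (x + t *\<^sub>R axis a 1) + f x
       - t *\<^sub>R t *\<^sub>R pd b (pd a f) x) \<le> t * (t * e)"
      using schwarz_est[OF W df dga cba e] by blast
    define t where "t = min d1 d2 / 2"
    have t: "0 < t" "t < d1" "t < d2" using d1 d2 by (auto simp: t_def)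
    define \<Delta> where "\<Delta> = f (x + t *\<^sub>R axis a 1 + t *\<^sub>R axis b 1) - f (x + t *\<^sub>R axis a 1) - f (x + t *\<^sub>R axis b 1) + f x"
    have e1: "norm (\<Delta> - (t * t) *\<^sub>R pd a (pd b f) x) \<le> t * (t * e)"
      using d1(2) t unfolding \<Delta>_def by simp
    have eqd: "f (x + t *\<^sub>R axis b 1 + t *\<^sub>R axis a 1) - f (x + t *\<^sub>R axis b 1) - f (x + t *\<^sub>R axis a 1) + f x = \<Delta>"
      unfolding \<Delta>_def by (simp add: algebra_simps)
    have e2: "norm (\<Delta> - (t * t) *\<^sub>R pd b (pd a f) x) \<le> t * (t * e)"
      unfolding eqd[symmetric] using d2(2) t by simp
    have "(t * t) *\<^sub>R z = (\<Delta> - (t * t) *\<^sub>R pd b (pd a f) x) - (\<Delta> - (t * t) *\<^sub>R pd a (pd b f) x)"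
      by (simp add: z_def algebra_simps)
    then have "norm ((t * t) *\<^sub>R z) \<le> norm (\<Delta> - (t * t) *\<^sub>R pd b (pd a f) x) + norm (\<Delta> - (t * t) *\<^sub>R pd a (pd b f) x)"
      by (metis norm_triangle_ineq4)
    also have "\<dots> \<le> (t * t) * (2 * e)" using e1 e2 by (simp add: algebra_simps)
    finally have "(t * t) * norm z \<le> (t * t) * (2 * e)" using t by simp
    then show ?thesis using t by (simp add: mult_le_cancel_left_pos)
  qed
  have "z = 0"
  proof (rule ccontr)
    assume "z \<noteq> 0"
    then have "norm z > 0" by simp
    then have "norm z \<le> 2 * (norm z / 4)" using bound[of "norm z / 4"] by simp
    then show False using \<open>norm z > 0\<close> by simp
  qed
  then show ?thesis by (simp add: z_def)
qed


lemma smooth_schwarz: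
  assumes "smooth_on W f" "open W" "x \<in> W"
  shows "pd a (pd b f) x = pd b (pd a f) x"
proof (rule schwarz[OF assms(2,3)])
  show "\<And>z. z \<in> W \<Longrightarrow> f differentiable at z" using smooth_differentiable assms by blast
  show "\<And>z. z \<in> W \<Longrightarrow> pd a f differentiable at z" using smooth_differentiable smooth_pd assms by blast
  show "\<And>z. z \<in> W \<Longrightarrow> pd b f differentiable at z" using smooth_differentiable smooth_pd assms by blast
  have "smooth_on W (pd a (pd b f))" "smooth_on W (pd b (pd a f))" using smooth_pd assms by blast+
  then show "continuous_on W (pd a (pd b f))" "continuous_on W (pd b (pd a f))"
    unfolding smooth_on_def by (metis C_k_on.simps(1))+
qed

lemma covd_nth: "covd G \<sigma> z $ b = pd b \<sigma> z + G z $ b *v \<sigma> z"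
  by (simp add: covd_def)

lemma extd_nth: "extd G \<phi> y $ a $ b = (1/2) *\<^sub>R ((pd a (\<lambda>z. \<phi> z $ b) y + G y $ a *v (\<phi> y $ b))
   - (pd b (\<lambda>z. \<phi> z $ a) y + G y $ b *v (\<phi> y $ a)))"
  by (simp add: extd_def)

lemma diff_mv:
  fixes M :: "real^'n \<Rightarrow> real^'m^'k"
  shows "M differentiable at y \<Longrightarrow> v differentiable at y \<Longrightarrow> (\<lambda>z. M z *v v z) differentiable at y"
  using differentiableI[OF bounded_bilinear.FDERIV[OF bounded_bilinear_mv pd_works pd_works]] by blast

lemma diff_nth: "f differentiable at y \<Longrightarrow> (\<lambda>z. f z $ c) differentiable at y"
  using differentiableI[OF bounded_linear.has_derivative[OF bounded_linear_vec_nth pd_works]] by blast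

lemma curv_formula:
  fixes G :: "real^'n \<Rightarrow> real^'k^'k^'n"
  assumes dG: "G differentiable at y"
    and ds: "\<sigma> differentiable at y"
    and dpd: "\<And>c. pd c \<sigma> differentiable at y"
  shows "curv G \<sigma> y $ a $ b = (1/2) *\<^sub>R ((pd a (pd b \<sigma>) y - pd b (pd a \<sigma>) y)
     + (pd a (\<lambda>z. G z $ b) y *v \<sigma> y + G y $ a *v (G y $ b *v \<sigma> y))
     - (pd b (\<lambda>z. G z $ a) y *v \<sigma> y + G y $ b *v (G y $ a *v \<sigma> y)))"
proof -
  have cv: "\<And>c. (\<lambda>z. covd G \<sigma> z $ c) = (\<lambda>z. pd c \<sigma> z + G z $ c *v \<sigma> z)" by (simp add: covd_def)
  have dGc: "\<And>c. (\<lambda>z. G z $ c) differentiable at y" using diff_nth[OF dG] by blast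
  have P: "pd c (\<lambda>z. covd G \<sigma> z $ d) y = pd c (pd d \<sigma>) y + (G y $ d *v pd c \<sigma> y + pd c (\<lambda>z. G z $ d) y *v \<sigma> y)" for c d
    unfolding cv
    by (simp only: pd_add[OF dpd diff_mv[OF dGc ds]] pd_bilinear[OF bounded_bilinear_mv dGc ds])
  show ?thesis
    unfolding curv_def extd_nth
    unfolding P
    unfolding covd_nth
    by (simp add: matrix_vector_right_distrib algebra_simps)
qed

lemma curv_tensorial:
  fixes G :: "real^'n \<Rightarrow> real^'k^'k^'n"
  assumes "open W" "y \<in> W" "smooth_on W \<sigma>" "G differentiable at y"
  shows "curv G \<sigma> y = curv_at G y (\<sigma> y)"
proof -
  have ds: "\<sigma> differentiable at y" using smooth_differentiable assms by blast
  have dpd: "\<And>c. pd c \<sigma> differentiable at y" using smooth_differentiable smooth_pd assms by blast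
  have pc: "\<And>c. pd c (\<lambda>_. \<sigma> y) = (\<lambda>_. 0)" by (rule ext) (rule pd_const)
  have dc: "(\<lambda>_::real^'n. \<sigma> y) differentiable at y" by simp
  have dpc: "\<And>c. pd c (\<lambda>_::real^'n. \<sigma> y) differentiable at y" unfolding pc by simp
  show ?thesis
    unfolding curv_at_def vec_eq_iff
    unfolding curv_formula[OF assms(4) ds dpd] curv_formula[OF assms(4) dc dpc]
    by (simp add: smooth_schwarz[OF assms(3,1,2)] pc pd_const)
qed


lemma extd_diff:
  assumes "\<And>b. (\<lambda>z. \<phi>1 z $ b) differentiable at y" "\<And>b. (\<lambda>z. \<phi>2 z $ b) differentiable at y"
  shows "extd G (\<lambda>z. \<phi>1 z - \<phi>2 z) y = extd G \<phi>1 y - extd G \<phi>2 y"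
proof -
  have e: "\<And>b. (\<lambda>z. (\<phi>1 z - \<phi>2 z) $ b) = (\<lambda>z. \<phi>1 z $ b - \<phi>2 z $ b)" by simp
  show ?thesis
    unfolding vec_eq_iff
    by (simp only: extd_nth e pd_diff[OF assms] vector_minus_component)
       (simp add: matrix_vector_mult_diff_distrib algebra_simps)
qed

lemma extd_local:
  assumes "open W" "y \<in> W" "\<And>z. z \<in> W \<Longrightarrow> \<phi>1 z = \<phi>2 z"
  shows "extd G \<phi>1 y = extd G \<phi>2 y"
proof -
  have "\<And>c b. pd c (\<lambda>z. \<phi>1 z $ b) y = pd c (\<lambda>z. \<phi>2 z $ b) y"
    by (rule pd_local[OF assms(1,2)]) (simp add: assms(3))
  then show ?thesis unfolding vec_eq_iff extd_nth using assms(2,3) by simp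
qed

lemma covd_add: "f differentiable at y \<Longrightarrow> g differentiable at y \<Longrightarrow>
   covd G (\<lambda>z. f z + g z) y = covd G f y + covd G g y"
  by (rule iffD2[OF vec_eq_iff], rule allI)
     (simp only: covd_nth vector_add_component pd_add matrix_vector_right_distrib add_ac)

lemma covd_diff: "f differentiable at y \<Longrightarrow> g differentiable at y \<Longrightarrow>
   covd G (\<lambda>z. f z - g z) y = covd G f y - covd G g y"
  by (rule iffD2[OF vec_eq_iff], rule allI)
     (simp add: covd_nth pd_diff matrix_vector_mult_diff_distrib)

theorem proposition2p8:
  fixes U :: "(real^'n) set"
    and G :: "real^'n \<Rightarrow> real^'k^'k^'n"
    and F :: "real^'n \<Rightarrow> (real^'k) set"
  assumes "open U"
    and "connection_on U G"
    and "curv_const_rank U G"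
    and "subbundle_on U F"
    and "parallel_on U G F"
    and "sub_curv_const_rank U G F"
    and "exact_sub_on U G F"
    and "exact_quot_on U G F"
    and "quot_curv_injective_on U G F"
  shows "exact_on U G"
  unfolding exact_on_def
proof (intro allI impI ballI)
  fix V \<phi> \<psi> x
  assume H: "open V \<and> V \<subseteq> U \<and> smooth_on V \<phi> \<and> smooth_on V \<psi> \<and> (\<forall>x\<in>V. extd G \<phi> x = curv G \<psi> x)"
    and xV: "x \<in> V"
  have oV: "open V" and VU: "V \<subseteq> U" and s\<phi>: "smooth_on V \<phi>" and s\<psi>: "smooth_on V \<psi>"
    and eq: "\<And>y. y \<in> V \<Longrightarrow> extd G \<phi> y = curv G \<psi> y" using H by auto
  have sub: "\<And>y. y \<in> U \<Longrightarrow> subspace (F y)" using assms(4) unfolding subbundle_on_def by blast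
  have sG: "smooth_on U G" using assms(2) unfolding connection_on_def .
  have dG: "\<And>y. y \<in> U \<Longrightarrow> G differentiable at y" using smooth_differentiable[OF sG assms(1)] by blast
  have "\<forall>x\<in>V. \<forall>a b. extd G \<phi> x $ a $ b - curv G \<psi> x $ a $ b \<in> F x"
    using eq sub subspace_0 VU by auto
  then obtain W1 \<eta> where W1: "open W1" "x \<in> W1" "W1 \<subseteq> V" "smooth_on W1 \<eta>"
    and \<eta>F: "\<And>y a. y \<in> W1 \<Longrightarrow> covd G \<eta> y $ a - \<phi> y $ a \<in> F y"
    using assms(8) oV VU s\<phi> s\<psi> xV unfolding exact_quot_on_def by metis
  have W1U: "W1 \<subseteq> U" using W1 VU by blast
  have sG1: "smooth_on W1 G" using smooth_subset[OF sG W1U] .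
  have s\<phi>1: "smooth_on W1 \<phi>" using smooth_subset[OF s\<phi> W1(3)] .
  have s\<psi>1: "smooth_on W1 \<psi>" using smooth_subset[OF s\<psi> W1(3)] .
  define \<phi>' where "\<phi>' = (\<lambda>y. \<phi> y - covd G \<eta> y)"
  define \<psi>' where "\<psi>' = (\<lambda>y. \<psi> y - \<eta> y)"
  have sc\<eta>: "smooth_on W1 (covd G \<eta>)" by (rule smooth_covd[OF W1(1) sG1 W1(4)])
  have sc\<psi>: "smooth_on W1 (covd G \<psi>)" by (rule smooth_covd[OF W1(1) sG1 s\<psi>1])
  have s\<phi>': "smooth_on W1 \<phi>'" unfolding \<phi>'_def by (rule smooth_diff[OF W1(1) s\<phi>1 sc\<eta>])
  have s\<psi>': "smooth_on W1 \<psi>'" unfolding \<psi>'_def by (rule smooth_diff[OF W1(1) s\<psi>1 W1(4)])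
  have F\<phi>': "\<forall>y\<in>W1. \<forall>b. \<phi>' y $ b \<in> F y"
  proof (intro ballI allI)
    fix y b assume y: "y \<in> W1"
    have "\<phi>' y $ b = - (covd G \<eta> y $ b - \<phi> y $ b)" by (simp add: \<phi>'_def)
    then show "\<phi>' y $ b \<in> F y" using subspace_neg[OF sub \<eta>F[OF y]] y W1U by auto
  qed
  have dn: "\<And>f b y. smooth_on W1 f \<Longrightarrow> y \<in> W1 \<Longrightarrow> (\<lambda>z. f z $ b) differentiable at y"
    using diff_nth smooth_differentiable W1(1) by blast
  have ex: "\<forall>y\<in>W1. extd G \<phi>' y = curv G \<psi>' y"
  proof
    fix y assume y: "y \<in> W1"
    have "extd G \<phi>' y = extd G \<phi> y - extd G (covd G \<eta>) y"
      unfolding \<phi>'_def by (rule extd_diff[OF dn[OF s\<phi>1 y] dn[OF sc\<eta> y]])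
    also have "\<dots> = curv G \<psi> y - curv G \<eta> y" using eq[of y] y W1(3) by (auto simp: curv_def)
    also have "\<dots> = extd G (\<lambda>z. covd G \<psi> z - covd G \<eta> z) y"
      unfolding curv_def by (rule extd_diff[OF dn[OF sc\<psi> y] dn[OF sc\<eta> y], symmetric])
    also have "\<dots> = curv G \<psi>' y"
      unfolding curv_def \<psi>'_def
    proof (rule extd_local[OF W1(1) y])
      fix z assume z: "z \<in> W1"
      show "covd G \<psi> z - covd G \<eta> z = covd G (\<lambda>y. \<psi> y - \<eta> y) z"
        by (rule covd_diff[symmetric]) (use smooth_differentiable W1(1) z s\<psi>1 W1(4) in blast)+
    qed
    finally show "extd G \<phi>' y = curv G \<psi>' y" .
  qed
  have F\<psi>': "\<forall>y\<in>W1. \<psi>' y \<in> F y"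
  proof
    fix y assume y: "y \<in> W1"
    have yU: "y \<in> U" using y W1U by blast
    have par: "\<And>b a. covd G (\<lambda>z. \<phi>' z $ b) y $ a \<in> F y"
    proof -
      fix b a
      have "smooth_on W1 (\<lambda>z. \<phi>' z $ b)" by (rule smooth_nth[OF W1(1) s\<phi>'])
      moreover have "\<forall>z\<in>W1. \<phi>' z $ b \<in> F z" using F\<phi>' by blast
      ultimately show "covd G (\<lambda>z. \<phi>' z $ b) y $ a \<in> F y"
        using assms(5) W1(1) W1U y unfolding parallel_on_def by blast
    qed
    have "curv_at G y (\<psi>' y) = extd G \<phi>' y"
      using curv_tensorial[OF W1(1) y s\<psi>' dG[OF yU]] ex y by simp
    moreover have "\<forall>a b. extd G \<phi>' y $ a $ b \<in> F y"
    proof (intro allI)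
      fix a b
      have p1: "pd a (\<lambda>z. \<phi>' z $ b) y + G y $ a *v (\<phi>' y $ b) \<in> F y"
        using par[of b a] unfolding covd_nth .
      have p2: "pd b (\<lambda>z. \<phi>' z $ a) y + G y $ b *v (\<phi>' y $ a) \<in> F y"
        using par[of a b] unfolding covd_nth .
      show "extd G \<phi>' y $ a $ b \<in> F y"
        unfolding extd_nth by (rule subspace_scale[OF sub[OF yU] subspace_diff[OF sub[OF yU] p1 p2]])
    qed
    ultimately have "\<forall>a b. curv_at G y (\<psi>' y) $ a $ b \<in> F y" by simp
    then show "\<psi>' y \<in> F y" using assms(9) yU unfolding quot_curv_injective_on_def by blast
  qed
  obtain W2 \<eta>' where W2: "open W2" "x \<in> W2" "W2 \<subseteq> W1" "smooth_on W2 \<eta>'"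
    and \<eta>'F: "\<forall>y\<in>W2. \<eta>' y \<in> F y" and \<eta>'eq: "\<forall>y\<in>W2. covd G \<eta>' y = \<phi>' y"
    using assms(7) W1(1,2) W1U s\<phi>' s\<psi>' F\<phi>' F\<psi>' ex unfolding exact_sub_on_def by metis
  show "\<exists>W \<eta>. open W \<and> x \<in> W \<and> W \<subseteq> V \<and> smooth_on W \<eta> \<and> (\<forall>y\<in>W. covd G \<eta> y = \<phi> y)"
  proof (intro exI conjI ballI)
    show "open W2" "x \<in> W2" by (rule W2(1), rule W2(2))
    show "W2 \<subseteq> V" using W2(3) W1(3) by blast
    show "smooth_on W2 (\<lambda>y. \<eta> y + \<eta>' y)"
      by (rule smooth_add[OF W2(1) smooth_subset[OF W1(4) W2(3)] W2(4)])
    fix y assume y: "y \<in> W2"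
    have "covd G (\<lambda>y. \<eta> y + \<eta>' y) y = covd G \<eta> y + covd G \<eta>' y"
      by (rule covd_add) (use smooth_differentiable W2 y W1(1,4) in blast)+
    also have "\<dots> = \<phi> y" using \<eta>'eq y by (simp add: \<phi>'_def)
    finally show "covd G (\<lambda>y. \<eta> y + \<eta>' y) y = \<phi> y" .
  qed
qed

end
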